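(* Let $R$ be a ring with unit and let $C$ be a bounded chain complex of finitely generated free $R[x,x^{-1}]$-modules. Then there exists a strict perfect complex of sheaves $\mathcal{V} = (V^- \xrightarrow{\mu^-} V \xleftarrow{\mu^+} V^+)$ on $\mathbb{P}^1$ such that: (1) the complexes $V^-$ and $V^+$ consist of finitely generated free $R[x^{-1}]$- and $R[x]$-modules, respectively; (2) the complex $V$ is isomorphic to $C$; (3) the complex of global sections $H^0(\mathbb{P}^1;\mathcal{V})$, given in each degree $n$ by $\ker(-\mu^-+\mu^+\colon V^-_n\oplus V^+_n\to V_n)$, is a bounded complex of finitely generated free $R$-modules; (4) $H^j(\mathbb{P}^1;\mathcal{V}) = 0$ in each chain degree for all $j\geq 1$; that is, $-\mu^-+\mu^+\colon V^-_n\oplus V^+_n\to V_n$ is surjective for every $n$.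
   Context: Modules are right modules. A sheaf on $\mathbb{P}^1$ over $R$ is a diagram $M^- \xrightarrow{\mu^-} M \xleftarrow{\mu^+} M^+$ where $M^-$ is an $R[x^{-1}]$-module, $M$ an $R[x,x^{-1}]$-module, $M^+$ an $R[x]$-module, $\mu^-$ is $R[x^{-1}]$-linear, $\mu^+$ is $R[x]$-linear, and the adjoint maps $M^-\otimes_{R[x^{-1}]}R[x,x^{-1}]\to M$ and $M^+\otimes_{R[x]}R[x,x^{-1}]\to M$ are isomorphisms; morphisms are compatible triples of linear maps. A vector bundle is a sheaf whose three entries are finitely generated projective over their respective rings; a strict perfect complex of sheaves is a bounded chain complex of vector bundles. For a sheaf $\mathcal{M}$ the cohomology modules are $H^0(\mathbb{P}^1;\mathcal{M}) = \ker(-\mu^-+\mu^+\colon M^-\oplus M^+\to M)$, $H^1(\mathbb{P}^1;\mathcal{M}) = \mathrm{coker}(-\mu^-+\mu^+)$, and $H^j = 0$ for $j\ne 0,1$; these are $R$-modules. *)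

theory Defs
  imports "HOL-Library.Poly_Mapping" "Jordan_Normal_Form.Matrix"
begin

text \<open>R[x,x^-1] is the group ring of the integers over R: finitely supported
  functions int to R with convolution product.\<close>

type_synonym 'a laurent = "int \<Rightarrow>\<^sub>0 'a"

definition Rx :: "'a::zero laurent set" where
  "Rx = {f. Poly_Mapping.keys f \<subseteq> {0..}}"

definition Rxinv :: "'a::zero laurent set" where
  "Rxinv = {f. Poly_Mapping.keys f \<subseteq> {..0}}"

definition const_L :: "'a::zero \<Rightarrow> 'a laurent" where
  "const_L r = Poly_Mapping.single 0 r"

text \<open>A finitely generated free right S-module (S one of the rings above) is S^n,
  realised as column vectors of length n with entries in S; an S-linear map
  S^m \<rightarrow> S^n is left multiplication by an n x m matrix with entries in S.\<close>

definition vec_over :: "'a set \<Rightarrow> nat \<Rightarrow> 'a vec set" where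
  "vec_over S n = {v. v \<in> carrier_vec n \<and> (\<forall>i<n. v $ i \<in> S)}"

definition mat_over :: "'a set \<Rightarrow> nat \<Rightarrow> nat \<Rightarrow> 'a mat set" where
  "mat_over S m n = {A. A \<in> carrier_mat m n \<and> (\<forall>i<m. \<forall>j<n. A $$ (i,j) \<in> S)}"

definition iso_mat_over :: "'a::semiring_1 set \<Rightarrow> 'a mat \<Rightarrow> bool" where
  "iso_mat_over S A \<longleftrightarrow> (\<exists>B \<in> mat_over S (dim_col A) (dim_row A).
      A * B = 1\<^sub>m (dim_row A) \<and> B * A = 1\<^sub>m (dim_col A))"

definition bounded_ranks :: "(int \<Rightarrow> nat) \<Rightarrow> bool" where
  "bounded_ranks r \<longleftrightarrow> (\<exists>lo hi. \<forall>n. n < lo \<or> hi < n \<longrightarrow> r n = 0)"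

definition free_complex :: "'a::semiring_0 set \<Rightarrow> (int \<Rightarrow> nat) \<Rightarrow> (int \<Rightarrow> 'a mat) \<Rightarrow> bool" where
  "free_complex S r d \<longleftrightarrow>
     (\<forall>n. d n \<in> mat_over S (r (n - 1)) (r n)) \<and>
     (\<forall>n. d (n - 1) * d n = 0\<^sub>m (r (n - 2)) (r n)) \<and>
     bounded_ranks r"

definition chain_map :: "'a::semiring_0 set \<Rightarrow> (int \<Rightarrow> nat) \<Rightarrow> (int \<Rightarrow> 'a mat)
    \<Rightarrow> (int \<Rightarrow> nat) \<Rightarrow> (int \<Rightarrow> 'a mat) \<Rightarrow> (int \<Rightarrow> 'a mat) \<Rightarrow> bool" where
  "chain_map S r d r' d' f \<longleftrightarrow>
     (\<forall>n. f n \<in> mat_over S (r' n) (r n)) \<and> (\<forall>n. f (n - 1) * d n = d' n * f n)"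

definition complex_iso :: "'a::semiring_1 set \<Rightarrow> (int \<Rightarrow> nat) \<Rightarrow> (int \<Rightarrow> 'a mat)
    \<Rightarrow> (int \<Rightarrow> nat) \<Rightarrow> (int \<Rightarrow> 'a mat) \<Rightarrow> bool" where
  "complex_iso S r d r' d' \<longleftrightarrow> (\<exists>f g. chain_map S r d r' d' f \<and> chain_map S r' d' r d g \<and>
     (\<forall>n. g n * f n = 1\<^sub>m (r n) \<and> f n * g n = 1\<^sub>m (r' n)))"

text \<open>Data: V^- (ranks a, differentials dm, over R[x^-1]), V (ranks c, differentials d,
  over R[x,x^-1]), V^+ (ranks b, differentials dp, over R[x]), and the structure maps
  mum n : V^-_n \<rightarrow> V_n, mup n : V^+_n \<rightarrow> V_n, given by their matrices over R[x,x^-1]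
  (an R[x^-1]-linear map R[x^-1]^a \<rightarrow> R[x,x^-1]^c is determined by the images of the basis).
  The adjoint map V^-_n \<otimes> R[x,x^-1] = R[x,x^-1]^(a n) \<rightarrow> V_n is multiplication by the
  same matrix, so the sheaf condition says that this matrix is invertible over R[x,x^-1].\<close>

definition sheaf_complex_free ::
  "(int \<Rightarrow> nat) \<Rightarrow> (int \<Rightarrow> 'a::ring_1 laurent mat) \<Rightarrow> (int \<Rightarrow> 'a laurent mat)
   \<Rightarrow> (int \<Rightarrow> nat) \<Rightarrow> (int \<Rightarrow> 'a laurent mat) \<Rightarrow> (int \<Rightarrow> 'a laurent mat)
   \<Rightarrow> (int \<Rightarrow> nat) \<Rightarrow> (int \<Rightarrow> 'a laurent mat) \<Rightarrow> bool" where
  "sheaf_complex_free a dm mum b dp mup c d \<longleftrightarrow>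
     free_complex Rxinv a dm \<and> free_complex Rx b dp \<and> free_complex UNIV c d \<and>
     chain_map UNIV a dm c d mum \<and> chain_map UNIV b dp c d mup \<and>
     (\<forall>n. iso_mat_over UNIV (mum n) \<and> iso_mat_over UNIV (mup n))"

definition H0 :: "(int \<Rightarrow> nat) \<Rightarrow> (int \<Rightarrow> 'a::ring_1 laurent mat)
   \<Rightarrow> (int \<Rightarrow> nat) \<Rightarrow> (int \<Rightarrow> 'a laurent mat) \<Rightarrow> (int \<Rightarrow> nat) \<Rightarrow> int
   \<Rightarrow> ('a laurent vec \<times> 'a laurent vec) set" where
  "H0 a mum b mup c n = {(u, w). u \<in> vec_over Rxinv (a n) \<and> w \<in> vec_over Rx (b n) \<and>
       - (mum n *\<^sub>v u) + mup n *\<^sub>v w = 0\<^sub>v (c n)}"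

definition rlin_comb :: "nat \<Rightarrow> 'a::ring_1 laurent vec list \<Rightarrow> 'a list \<Rightarrow> 'a laurent vec" where
  "rlin_comb n vs cs = vec n (\<lambda>i. \<Sum>j<length vs. (vs ! j) $ i * const_L (cs ! j))"

definition fg_free_R :: "nat \<Rightarrow> nat \<Rightarrow> ('a::ring_1 laurent vec \<times> 'a laurent vec) set \<Rightarrow> bool" where
  "fg_free_R k l K \<longleftrightarrow>
     (\<forall>x\<in>K. \<forall>y\<in>K. \<forall>r s. (rlin_comb k [fst x, fst y] [r, s], rlin_comb l [snd x, snd y] [r, s]) \<in> K) \<and>
     (\<exists>es. set es \<subseteq> K \<and>
        (\<forall>x\<in>K. \<exists>!cs. length cs = length es \<and>
            x = (rlin_comb k (map fst es) cs, rlin_comb l (map snd es) cs)))"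

definition H0_bounded_fg_free_complex ::
  "(int \<Rightarrow> nat) \<Rightarrow> (int \<Rightarrow> 'a::ring_1 laurent mat) \<Rightarrow> (int \<Rightarrow> 'a laurent mat)
   \<Rightarrow> (int \<Rightarrow> nat) \<Rightarrow> (int \<Rightarrow> 'a laurent mat) \<Rightarrow> (int \<Rightarrow> 'a laurent mat)
   \<Rightarrow> (int \<Rightarrow> nat) \<Rightarrow> bool" where
  "H0_bounded_fg_free_complex a dm mum b dp mup c \<longleftrightarrow>
     (\<forall>n. fg_free_R (a n) (b n) (H0 a mum b mup c n)) \<and>
     (\<forall>n. \<forall>(u, w) \<in> H0 a mum b mup c n. (dm n *\<^sub>v u, dp n *\<^sub>v w) \<in> H0 a mum b mup c (n - 1)) \<and>
     (\<exists>lo hi. \<forall>n. n < lo \<or> hi < n \<longrightarrow> H0 a mum b mup c n = {(0\<^sub>v (a n), 0\<^sub>v (b n))})"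

definition H1_vanishes ::
  "(int \<Rightarrow> nat) \<Rightarrow> (int \<Rightarrow> 'a::ring_1 laurent mat)
   \<Rightarrow> (int \<Rightarrow> nat) \<Rightarrow> (int \<Rightarrow> 'a laurent mat) \<Rightarrow> (int \<Rightarrow> nat) \<Rightarrow> bool" where
  "H1_vanishes a mum b mup c \<longleftrightarrow>
     (\<forall>n. \<forall>v \<in> carrier_vec (c n). \<exists>u \<in> vec_over Rxinv (a n). \<exists>w \<in> vec_over Rx (b n).
        - (mum n *\<^sub>v u) + mup n *\<^sub>v w = v)"

end

theory Submission
  imports Defs
begin

definition X :: "int \<Rightarrow> 'a::ring_1 laurent" where "X t = Poly_Mapping.single t 1"

lemma lookup_X_mult: "Poly_Mapping.lookup (X t * f) s = Poly_Mapping.lookup f (s - t)"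
proof -
  have "Poly_Mapping.lookup (X t * f) s = (\<Sum>l. (1 when t = l) * (\<Sum>q. Poly_Mapping.lookup f q when s = l + q))"
    by (simp add: X_def lookup_mult lookup_single)
  also have "\<dots> = (\<Sum>l. if l = t then (\<Sum>q. Poly_Mapping.lookup f q when s = l + q) else 0)"
    by (rule Sum_any.cong) (auto simp: when_def)
  also have "\<dots> = (\<Sum>q. Poly_Mapping.lookup f q when s = t + q)"
    by simp
  also have "\<dots> = (\<Sum>q. if q = s - t then Poly_Mapping.lookup f q else 0)"
    by (rule Sum_any.cong) (auto simp: when_def)
  also have "\<dots> = Poly_Mapping.lookup f (s - t)" by simp
  finally show ?thesis .
qed

lemma lookup_mult_X: "Poly_Mapping.lookup (f * X t) s = Poly_Mapping.lookup f (s - t)"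
proof -
  have "Poly_Mapping.lookup (f * X t) s = (\<Sum>l. Poly_Mapping.lookup f l * (\<Sum>q. (1 when t = q) when s = l + q))"
    by (simp add: X_def lookup_mult lookup_single)
  also have "\<dots> = (\<Sum>l. Poly_Mapping.lookup f l * (1 when s = l + t))"
  proof (rule Sum_any.cong)
    fix l
    have "(\<Sum>q. (1::'a) when t = q when s = l + q) = (\<Sum>q. if q = t then (1 when s = l + t) else 0)"
      by (rule Sum_any.cong) (auto simp: when_def)
    then show "Poly_Mapping.lookup f l * (\<Sum>q. (1 when t = q) when s = l + q) = Poly_Mapping.lookup f l * (1 when s = l + t)"
      by simp
  qed
  also have "\<dots> = (\<Sum>l. if l = s - t then Poly_Mapping.lookup f l else 0)"
    by (rule Sum_any.cong) (auto simp: when_def)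
  also have "\<dots> = Poly_Mapping.lookup f (s - t)" by simp
  finally show ?thesis .
qed

lemma X_central: "X t * f = f * X t"
  by (rule poly_mapping_eqI) (simp add: lookup_X_mult lookup_mult_X)

lemma X_mult: "X s * X t = X (s + t)"
  by (simp add: X_def mult_single)

lemma X_0: "X 0 = 1"
  by (simp add: X_def)

definition SM :: "'a::ring_1 laurent \<Rightarrow> 'a laurent mat \<Rightarrow> 'a laurent mat" where
  "SM x A = mat (dim_row A) (dim_col A) (\<lambda>(i,j). x * A $$ (i,j))"

definition DM :: "nat \<Rightarrow> 'a::ring_1 laurent \<Rightarrow> 'a laurent mat" where
  "DM c x = mat c c (\<lambda>(i,j). if i = j then x else 0)"

lemma SM_carrier[simp]: "dim_row (SM x A) = dim_row A" "dim_col (SM x A) = dim_col A"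
  by (auto simp: SM_def)

lemma SM_index[simp]: "i < dim_row A \<Longrightarrow> j < dim_col A \<Longrightarrow> SM x A $$ (i,j) = x * A $$ (i,j)"
  by (simp add: SM_def)

lemma DM_carrier[simp]: "dim_row (DM c x) = c" "dim_col (DM c x) = c"
  by (auto simp: DM_def)

lemma DM_index[simp]: "i < c \<Longrightarrow> j < c \<Longrightarrow> DM c x $$ (i,j) = (if i = j then x else 0)"
  by (simp add: DM_def)

lemma sum_delta_lt: fixes g :: "nat \<Rightarrow> 'b::semiring_0" shows "i < (c::nat) \<Longrightarrow> (\<Sum>k\<in>{0..<c}. (if i = k then x else 0) * g k) = x * g i"
proof -
  assume "i < c"
  have "(\<Sum>k\<in>{0..<c}. (if i = k then x else 0) * g k) = (\<Sum>k\<in>{0..<c}. if i = k then x * g k else 0)"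
    by (rule sum.cong) auto
  also have "\<dots> = x * g i" using \<open>i < c\<close> by simp
  finally show ?thesis .
qed

lemma sum_delta_lt': fixes g :: "nat \<Rightarrow> 'b::semiring_0" shows "j < (c::nat) \<Longrightarrow> (\<Sum>k\<in>{0..<c}. g k * (if k = j then x else 0)) = g j * x"
proof -
  assume "j < c"
  have "(\<Sum>k\<in>{0..<c}. g k * (if k = j then x else 0)) = (\<Sum>k\<in>{0..<c}. if k = j then g k * x else 0)"
    by (rule sum.cong) auto
  also have "\<dots> = g j * x" using \<open>j < c\<close> by simp
  finally show ?thesis .
qed

lemma DM_mult: "A \<in> carrier_mat c m \<Longrightarrow> DM c x * A = SM x A"
  by (rule eq_matI) (auto simp: scalar_prod_def sum_delta_lt)

lemma mult_DM: "A \<in> carrier_mat n m \<Longrightarrow> A * DM m (X t) = SM (X t) A"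
  by (rule eq_matI) (auto simp: scalar_prod_def sum_delta_lt' X_central)

lemma SM_SM: "SM x (SM y A) = SM (x * y) A"
  by (rule eq_matI) (auto simp: mult.assoc)

lemma SM_mult_SM: "dim_col A = dim_row C \<Longrightarrow> SM (X s) A * SM (X t) C = SM (X (s + t)) (A * C)"
proof (rule eq_matI)
  fix i j assume "dim_col A = dim_row C" "i < dim_row (SM (X (s + t)) (A * C))" "j < dim_col (SM (X (s + t)) (A * C))"
  then show "(SM (X s) A * SM (X t) C) $$ (i, j) = SM (X (s + t)) (A * C) $$ (i, j)"
    apply (simp add: scalar_prod_def sum_distrib_left)
    apply (rule sum.cong, simp)
    apply (simp add: X_mult[symmetric] mult.assoc)
    apply (metis X_central mult.assoc)
    done
qed auto

lemma SM_zero: "SM x (0\<^sub>m r c) = 0\<^sub>m r c"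
  by (rule eq_matI) auto

lemma DM_DM: "DM c (X s) * DM c (X t) = DM c (X (s + t))"
  by (subst DM_mult) (auto intro!: eq_matI simp: X_mult)

lemma DM_one: "DM c 1 = 1\<^sub>m c"
  by (rule eq_matI) auto

lemma DM_mult_vec: "u \<in> carrier_vec c \<Longrightarrow> DM c x *\<^sub>v u = vec c (\<lambda>i. x * u $ i)"
  by (rule eq_vecI) (auto simp: scalar_prod_def sum_delta_lt)

lemma iso_DM: "iso_mat_over UNIV (DM c (X t))"
  unfolding iso_mat_over_def
  by (rule bexI[of _ "DM c (X (-t))"]) (auto simp: DM_DM X_0 DM_one mat_over_def)

lemma Rx_iff: "f \<in> Rx \<longleftrightarrow> (\<forall>s<0. Poly_Mapping.lookup f s = 0)"
  unfolding Rx_def by (auto simp: in_keys_iff) (meson atLeast_iff linorder_not_less)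

lemma Rxinv_iff: "f \<in> Rxinv \<longleftrightarrow> (\<forall>s>0. Poly_Mapping.lookup f s = 0)"
  unfolding Rxinv_def by (auto simp: in_keys_iff) (meson atMost_iff linorder_not_less)

lemma Rx_add: "f \<in> Rx \<Longrightarrow> g \<in> Rx \<Longrightarrow> f + g \<in> Rx"
  by (simp add: Rx_iff lookup_add)
lemma Rxinv_add: "f \<in> Rxinv \<Longrightarrow> g \<in> Rxinv \<Longrightarrow> f + g \<in> Rxinv"
  by (simp add: Rxinv_iff lookup_add)
lemma Rx_zero: "0 \<in> Rx" by (simp add: Rx_def)
lemma Rxinv_zero: "0 \<in> Rxinv" by (simp add: Rxinv_def)
lemma Rx_uminus: "f \<in> Rx \<Longrightarrow> - f \<in> Rx" by (simp add: Rx_def)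
lemma Rxinv_uminus: "f \<in> Rxinv \<Longrightarrow> - f \<in> Rxinv" by (simp add: Rxinv_def)

lemma Rx_mult: assumes "f \<in> Rx" "g \<in> Rx" shows "f * g \<in> Rx"
proof -
  have "Poly_Mapping.keys (f * g) \<subseteq> {0..}"
    using keys_mult[of f g] assms unfolding Rx_def by fastforce
  then show ?thesis by (simp add: Rx_def)
qed

lemma Rxinv_mult: assumes "f \<in> Rxinv" "g \<in> Rxinv" shows "f * g \<in> Rxinv"
proof -
  have "Poly_Mapping.keys (f * g) \<subseteq> {..0}"
    using keys_mult[of f g] assms unfolding Rxinv_def by fastforce
  then show ?thesis by (simp add: Rxinv_def)
qed

lemma Rx_sum: "(\<And>i. i \<in> I \<Longrightarrow> f i \<in> Rx) \<Longrightarrow> sum f I \<in> Rx"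
  by (induction I rule: infinite_finite_induct) (auto intro: Rx_add Rx_zero)
lemma Rxinv_sum: "(\<And>i. i \<in> I \<Longrightarrow> f i \<in> Rxinv) \<Longrightarrow> sum f I \<in> Rxinv"
  by (induction I rule: infinite_finite_induct) (auto intro: Rxinv_add Rxinv_zero)

lemma Rx_mult_vec: "A \<in> mat_over Rx r c \<Longrightarrow> u \<in> vec_over Rx c \<Longrightarrow> A *\<^sub>v u \<in> vec_over Rx r"
  unfolding mat_over_def vec_over_def
  by (auto simp: scalar_prod_def intro!: Rx_sum Rx_mult)
lemma Rxinv_mult_vec: "A \<in> mat_over Rxinv r c \<Longrightarrow> u \<in> vec_over Rxinv c \<Longrightarrow> A *\<^sub>v u \<in> vec_over Rxinv r"
  unfolding mat_over_def vec_over_def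
  by (auto simp: scalar_prod_def intro!: Rxinv_sum Rxinv_mult)

lemma const_L_Rx: "const_L r \<in> Rx" by (simp add: const_L_def Rx_def)
lemma const_L_Rxinv: "const_L r \<in> Rxinv" by (simp add: const_L_def Rxinv_def)

lemma X_mult_Rx: assumes "\<And>t. t \<in> Poly_Mapping.keys e \<Longrightarrow> \<bar>t\<bar> \<le> B" shows "X B * e \<in> Rx"
  unfolding Rx_iff lookup_X_mult
proof (intro allI impI)
  fix s :: int assume "s < 0"
  show "Poly_Mapping.lookup e (s - B) = 0"
    using assms[of "s - B"] \<open>s < 0\<close> by (force simp: in_keys_iff)
qed

lemma X_mult_Rxinv: assumes "\<And>t. t \<in> Poly_Mapping.keys e \<Longrightarrow> \<bar>t\<bar> \<le> B" shows "X (-B) * e \<in> Rxinv"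
  unfolding Rxinv_iff lookup_X_mult
proof (intro allI impI)
  fix s :: int assume "s > 0"
  show "Poly_Mapping.lookup e (s - - B) = 0"
    using assms[of "s + B"] \<open>s > 0\<close> by (force simp: in_keys_iff)
qed

lemma X_assoc: "X s * (X t * f) = X (s + t) * f"
  by (simp only: mult.assoc[symmetric] X_mult)

lemma X_inv_cancel: "X (-k) * (X k * f) = f" "X k * (X (-k) * f) = f"
  by (simp only: X_assoc, simp add: X_0)+

lemma lookup_X_const: "Poly_Mapping.lookup (X t * const_L r) s = (if s = t then r else 0)"
  unfolding lookup_X_mult const_L_def lookup_single by (simp add: when_def)

definition H0set :: "nat \<Rightarrow> int \<Rightarrow> ('a::ring_1 laurent vec \<times> 'a laurent vec) set" where
  "H0set c k = {(u, w). u \<in> vec_over Rxinv c \<and> w \<in> vec_over Rx c \<and>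
       - (DM c (X k) *\<^sub>v u) + DM c (X (-k)) *\<^sub>v w = 0\<^sub>v c}"

lemma eqX: "(- (X k * a) + X (-k) * b = 0) \<longleftrightarrow> b = X (k + k) * a" for a b :: "'a::ring_1 laurent"
  proof
    assume "- (X k * a) + X (-k) * b = 0"
    then have "X (-k) * b = X k * a" by (metis add.commute add_eq_0_iff minus_minus)
    then have "X k * (X (-k) * b) = X k * (X k * a)" by simp
    then have "b = X k * (X k * a)" by (simp only: X_inv_cancel)
    then show "b = X (k + k) * a" by (simp only: X_assoc)
  next
    assume "b = X (k + k) * a"
    then have "X (-k) * b = X k * a" by (simp only: X_assoc add.assoc[symmetric] add.left_inverse add_0)
    then show "- (X k * a) + X (-k) * b = 0" by simp
  qed

lemma H0set_char: "(u, w) \<in> H0set c k \<longleftrightarrow> u \<in> vec_over Rxinv c \<and> w \<in> vec_over Rx c \<and>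
    (\<forall>i<c. w $ i = X (k + k) * u $ i)"
proof
  assume "(u, w) \<in> H0set c k"
  then have u: "u \<in> vec_over Rxinv c" and w: "w \<in> vec_over Rx c" and E: "- (DM c (X k) *\<^sub>v u) + DM c (X (-k)) *\<^sub>v w = 0\<^sub>v c"
    by (auto simp: H0set_def)
  have "\<forall>i<c. w $ i = X (k + k) * u $ i"
  proof (intro allI impI)
    fix i assume "i < c"
    have d1: "DM c (X k) *\<^sub>v u = vec c (\<lambda>i. X k * u $ i)" using u by (simp add: DM_mult_vec vec_over_def)
    have d2: "DM c (X (-k)) *\<^sub>v w = vec c (\<lambda>i. X (-k) * w $ i)" using w by (simp add: DM_mult_vec vec_over_def)
    from arg_cong[OF E, of "\<lambda>v. v $ i"] \<open>i < c\<close>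
    have "- (X k * u $ i) + X (-k) * w $ i = 0"
      unfolding d1 d2 by simp
    then show "w $ i = X (k + k) * u $ i" using eqX by blast
  qed
  with u w show "u \<in> vec_over Rxinv c \<and> w \<in> vec_over Rx c \<and> (\<forall>i<c. w $ i = X (k + k) * u $ i)" by blast
next
  assume A: "u \<in> vec_over Rxinv c \<and> w \<in> vec_over Rx c \<and> (\<forall>i<c. w $ i = X (k + k) * u $ i)"
  have "- (DM c (X k) *\<^sub>v u) + DM c (X (-k)) *\<^sub>v w = 0\<^sub>v c"
  proof (rule eq_vecI)
    fix i assume "i < dim_vec (0\<^sub>v c :: 'a laurent vec)"
    then have "i < c" by simp
    then have "- (X k * u $ i) + X (-k) * w $ i = 0" using A eqX by blast
    moreover have d1: "DM c (X k) *\<^sub>v u = vec c (\<lambda>i. X k * u $ i)" using A by (simp add: DM_mult_vec vec_over_def)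
    moreover have d2: "DM c (X (-k)) *\<^sub>v w = vec c (\<lambda>i. X (-k) * w $ i)" using A by (simp add: DM_mult_vec vec_over_def)
    ultimately show "(- (DM c (X k) *\<^sub>v u) + DM c (X (-k)) *\<^sub>v w) $ i = 0\<^sub>v c $ i"
      using \<open>i < c\<close> by simp
  qed (use A in \<open>simp add: vec_over_def\<close>)
  with A show "(u, w) \<in> H0set c k" by (simp add: H0set_def)
qed

lemma lookup_rlin:
  assumes "i < c" "\<And>idx. idx < length vs \<Longrightarrow> vs ! idx $ i = (if i = q idx then X (p idx) else 0)"
  shows "Poly_Mapping.lookup (rlin_comb c vs cs $ i) s =
     (\<Sum>idx<length vs. if i = q idx \<and> s = p idx then cs ! idx else 0)"
  unfolding rlin_comb_def using assms(1)
  by (simp add: lookup_sum, intro sum.cong) (auto simp: assms(2) lookup_X_const)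

lemma divmod_iff:
  assumes "idx < c * N" 
  shows "(i = idx div N \<and> s = off - int (idx mod N)) \<longleftrightarrow> (off - int N < s \<and> s \<le> off \<and> idx = i*N + nat (off - s))"
proof -
  from assms have "N > 0" by (cases N) auto
  show ?thesis
  proof
    assume H: "i = idx div N \<and> s = off - int (idx mod N)"
    then have a: "nat (off - s) = idx mod N" by simp
    have b: "idx mod N < N" using \<open>N > 0\<close> by simp
    have c: "i*N + nat (off - s) = idx" using H a by (metis div_mult_mod_eq)
    have "off - int N < s" using H b by linarith
    moreover have "s \<le> off" using H by linarith
    ultimately show "off - int N < s \<and> s \<le> off \<and> idx = i*N + nat (off - s)"
      using c by simp
  next
    assume H: "off - int N < s \<and> s \<le> off \<and> idx = i*N + nat (off - s)"
    then have r: "nat (off - s) < N" by linarith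
    have "(i*N + nat (off - s)) div N = i" using r by simp
    then have "idx div N = i" using H by simp
    moreover have "(i*N + nat (off - s)) mod N = nat (off - s)" using r by simp
    then have "idx mod N = nat (off - s)" using H by simp
    ultimately show "i = idx div N \<and> s = off - int (idx mod N)" using H by simp
  qed
qed

lemma G_sum:
  fixes cs :: "'b::comm_monoid_add list"
  assumes "i < c"
  shows "(\<Sum>idx<c*N. if i = idx div N \<and> s = off - int (idx mod N) then cs ! idx else 0) =
    (if off - int N < s \<and> s \<le> off then cs ! (i*N + nat (off - s)) else 0)"
proof -
  have "(\<Sum>idx<c*N. if i = idx div N \<and> s = off - int (idx mod N) then cs ! idx else 0) =
        (\<Sum>idx<c*N. if off - int N < s \<and> s \<le> off \<and> idx = i*N + nat (off - s) then cs ! idx else 0)"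
  proof (rule sum.cong)
    fix idx assume "idx \<in> {..<c*N}"
    then have "idx < c * N" by simp
    then show "(if i = idx div N \<and> s = off - int (idx mod N) then cs ! idx else 0) =
        (if off - int N < s \<and> s \<le> off \<and> idx = i*N + nat (off - s) then cs ! idx else 0)"
      using divmod_iff[of idx c N i s off] by presburger
  qed (rule refl)
  also have "\<dots> = (if off - int N < s \<and> s \<le> off then cs ! (i*N + nat (off - s)) else 0)"
  proof (cases "off - int N < s \<and> s \<le> off")
    case True
    then have "nat (off - s) < N" by linarith
    moreover have "(i+1)*N \<le> c*N" using \<open>i < c\<close> by (intro mult_le_mono1) simp
    ultimately have lt: "i*N + nat (off - s) < c*N" by simp
    have "(\<Sum>idx<c*N. if off - int N < s \<and> s \<le> off \<and> idx = i*N + nat (off - s) then cs ! idx else 0)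
       = (\<Sum>idx<c*N. if idx = i*N + nat (off - s) then cs ! idx else 0)"
      using True by simp
    also have "\<dots> = cs ! (i*N + nat (off - s))" using lt by (simp only: sum.delta finite_lessThan lessThan_iff if_True)
    finally show ?thesis using True by simp
  next
    case False
    have "(\<Sum>idx<c*N. if off - int N < s \<and> s \<le> off \<and> idx = i*N + nat (off - s) then cs ! idx else 0) = 0"
      by (rule sum.neutral) (use False in auto)
    then show ?thesis using False by (simp only: if_False)
  qed
  finally show ?thesis .
qed

lemma X_Rx: "t \<ge> 0 \<Longrightarrow> X t \<in> Rx"
  by (simp add: X_def Rx_def)
lemma X_Rxinv: "t \<le> 0 \<Longrightarrow> X t \<in> Rxinv"
  by (simp add: X_def Rxinv_def)

lemma H0set_char2: "(u, w) \<in> H0set c k \<longleftrightarrow> u \<in> vec_over Rxinv c \<and> w \<in> vec_over Rx c \<and>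
    (\<forall>i<c. w $ i = X (2 * k) * u $ i)"
  using H0set_char[of u w c k] by (simp only: mult_2)

lemma rlin2: "rlin_comb n [a, b] [r, s] = vec n (\<lambda>i. a $ i * const_L r + b $ i * const_L s)"
  by (simp add: rlin_comb_def numeral_2_eq_2 lessThan_Suc add.commute)

lemma H0set_closed:
  assumes "x \<in> H0set c k" "y \<in> H0set c k"
  shows "(rlin_comb c [fst x, fst y] [r, s], rlin_comb c [snd x, snd y] [r, s]) \<in> H0set c k"
proof -
  obtain u1 w1 where x: "x = (u1, w1)" by (cases x)
  obtain u2 w2 where y: "y = (u2, w2)" by (cases y)
  have A: "u1 \<in> vec_over Rxinv c" "w1 \<in> vec_over Rx c" "\<forall>i<c. w1 $ i = X (k + k) * u1 $ i"
    using assms(1) unfolding x H0set_char2 by auto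
  have B: "u2 \<in> vec_over Rxinv c" "w2 \<in> vec_over Rx c" "\<forall>i<c. w2 $ i = X (k + k) * u2 $ i"
    using assms(2) unfolding y H0set_char2 by auto
  have 1: "vec c (\<lambda>i. u1 $ i * const_L r + u2 $ i * const_L s) \<in> vec_over Rxinv c"
    using A(1) B(1) by (auto simp: vec_over_def intro!: Rxinv_add Rxinv_mult const_L_Rxinv)
  have 2: "vec c (\<lambda>i. w1 $ i * const_L r + w2 $ i * const_L s) \<in> vec_over Rx c"
    using A(2) B(2) by (auto simp: vec_over_def intro!: Rx_add Rx_mult const_L_Rx)
  have 3: "\<forall>i<c. vec c (\<lambda>i. w1 $ i * const_L r + w2 $ i * const_L s) $ i =
      X (2 * k) * vec c (\<lambda>i. u1 $ i * const_L r + u2 $ i * const_L s) $ i"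
    using A(3) B(3) by (simp add: distrib_left mult.assoc)
  show ?thesis unfolding x y fst_conv snd_conv rlin2 H0set_char2
    using 1 2 3 by blast
qed

definition NN :: "int \<Rightarrow> nat" where "NN k = nat (2 * k + 1)"

definition ebase :: "nat \<Rightarrow> int \<Rightarrow> nat \<Rightarrow> 'a::ring_1 laurent vec \<times> 'a laurent vec" where
  "ebase c k idx = (vec c (\<lambda>i. if i = idx div NN k then X (0 - int (idx mod NN k)) else 0),
                    vec c (\<lambda>i. if i = idx div NN k then X (2 * k - int (idx mod NN k)) else 0))"

definition ebasis :: "nat \<Rightarrow> int \<Rightarrow> ('a::ring_1 laurent vec \<times> 'a laurent vec) list" where
  "ebasis c k = map (ebase c k) [0..<c * NN k]"

lemma ebase_in: "idx < c * NN k \<Longrightarrow> ebase c k idx \<in> H0set c k"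
proof -
  assume "idx < c * NN k"
  then have "NN k > 0" by (cases "NN k") auto
  have m: "int (idx mod NN k) \<le> 2 * k"
  proof -
    have "idx mod NN k < NN k" using \<open>NN k > 0\<close> by simp
    then show ?thesis unfolding NN_def by linarith
  qed
  have [simp]: "X (2 * k) * X (0 - int (idx mod NN k)) = X (2 * k - int (idx mod NN k))"
    by (simp add: X_mult)
  show ?thesis unfolding ebase_def H0set_char2
  proof (intro conjI allI impI)
    show "vec c (\<lambda>i. if i = idx div NN k then X (0 - int (idx mod NN k)) else 0) \<in> vec_over Rxinv c"
      by (auto simp: vec_over_def Rxinv_zero intro!: X_Rxinv)
    show "vec c (\<lambda>i. if i = idx div NN k then X (2 * k - int (idx mod NN k)) else 0) \<in> vec_over Rx c"
      using m by (auto simp: vec_over_def Rx_zero intro!: X_Rx)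
  qed (simp add: X_mult)
qed


lemma ebasis_len: "length (ebasis c k) = c * NN k"
  by (simp add: ebasis_def)

lemma lookup_rlin_fst:
  fixes cs :: "'a::ring_1 list" and s k :: int
  assumes "i < c"
  shows "Poly_Mapping.lookup (rlin_comb c (map fst (ebasis c k)) cs $ i) s =
    (if 0 - int (NN k) < s \<and> s \<le> 0 then cs ! (i * NN k + nat (0 - s)) else 0)"
proof -
  have P: "\<And>idx. idx < c * NN k \<Longrightarrow> fst (ebasis c k ! idx :: 'a laurent vec \<times> 'a laurent vec) $ i = (if i = idx div NN k then X (0 - int (idx mod NN k)) else 0)"
    using assms by (simp add: ebasis_def ebase_def ebasis_len)
  have "Poly_Mapping.lookup (rlin_comb c (map fst (ebasis c k)) cs $ i) s =
     (\<Sum>idx<c * NN k. if i = idx div NN k \<and> s = 0 - int (idx mod NN k) then cs ! idx else 0)"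
    unfolding rlin_comb_def using assms by (simp add: lookup_sum ebasis_len, intro sum.cong) (auto simp: P lookup_X_const)
  also have "\<dots> = (if 0 - int (NN k) < s \<and> s \<le> 0 then cs ! (i * NN k + nat (0 - s)) else 0)"
    by (rule G_sum[OF assms])
  finally show ?thesis .
qed

lemma lookup_rlin_snd:
  fixes cs :: "'a::ring_1 list" and s k :: int
  assumes "i < c"
  shows "Poly_Mapping.lookup (rlin_comb c (map snd (ebasis c k)) cs $ i) s =
    (if 2 * k - int (NN k) < s \<and> s \<le> 2 * k then cs ! (i * NN k + nat (2 * k - s)) else 0)"
proof -
  have P: "\<And>idx. idx < c * NN k \<Longrightarrow> snd (ebasis c k ! idx :: 'a laurent vec \<times> 'a laurent vec) $ i = (if i = idx div NN k then X (2 * k - int (idx mod NN k)) else 0)"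
    using assms by (simp add: ebasis_def ebase_def ebasis_len)
  have "Poly_Mapping.lookup (rlin_comb c (map snd (ebasis c k)) cs $ i) s =
     (\<Sum>idx<c * NN k. if i = idx div NN k \<and> s = 2 * k - int (idx mod NN k) then cs ! idx else 0)"
    unfolding rlin_comb_def using assms by (simp add: lookup_sum ebasis_len, intro sum.cong) (auto simp: P lookup_X_const)
  also have "\<dots> = (if 2 * k - int (NN k) < s \<and> s \<le> 2 * k then cs ! (i * NN k + nat (2 * k - s)) else 0)"
    by (rule G_sum[OF assms])
  finally show ?thesis .
qed

lemma lookup_u_vanish:
  assumes "(u, w) \<in> H0set c k" "i < c" "\<not> (0 - int (NN k) < s \<and> s \<le> 0)"
  shows "Poly_Mapping.lookup (u $ i) s = 0"
proof -
  from assms(1) have u: "u \<in> vec_over Rxinv c" and w: "w \<in> vec_over Rx c"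
    and r: "\<forall>i<c. w $ i = X (2 * k) * u $ i" unfolding H0set_char2 by auto
  show ?thesis
  proof (cases "s > 0")
    case True
    then show ?thesis using u assms(2) by (auto simp: vec_over_def Rxinv_iff)
  next
    case False
    then have "s + 2 * k < 0" using assms(3) unfolding NN_def by linarith
    then have "Poly_Mapping.lookup (w $ i) (s + 2 * k) = 0" using w assms(2) by (auto simp: vec_over_def Rx_iff)
    then show ?thesis using r assms(2) by (simp add: lookup_X_mult)
  qed
qed

definition coords :: "nat \<Rightarrow> int \<Rightarrow> 'a::ring_1 laurent vec \<Rightarrow> 'a list" where
  "coords c k u = map (\<lambda>idx. Poly_Mapping.lookup (u $ (idx div NN k)) (- int (idx mod NN k))) [0..<c * NN k]"

lemma coords_nth:
  assumes "i < c" "0 - int (NN k) < s" "s \<le> 0"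
  shows "coords c k u ! (i * NN k + nat (0 - s)) = Poly_Mapping.lookup (u $ i) s"
proof -
  have r: "nat (0 - s) < NN k" using assms by linarith
  moreover have "(i+1) * NN k \<le> c * NN k" using assms(1) by (intro mult_le_mono1) simp
  ultimately have lt: "i * NN k + nat (0 - s) < c * NN k" by simp
  have "(i * NN k + nat (0 - s)) div NN k = i" using r by simp
  moreover have "(i * NN k + nat (0 - s)) mod NN k = nat (0 - s)" using r by simp
  ultimately show ?thesis using lt assms by (simp add: coords_def)
qed

lemma H0set_fg_free: "fg_free_R c c ((H0set c k :: ('a::ring_1 laurent vec \<times> 'a laurent vec) set))"
  unfolding fg_free_R_def
proof (intro conjI ballI allI)
  fix x y :: "'a laurent vec \<times> 'a laurent vec" and r s :: 'a assume "x \<in> (H0set c k :: ('a laurent vec \<times> 'a laurent vec) set)" "y \<in> (H0set c k :: ('a laurent vec \<times> 'a laurent vec) set)"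
  then show "(rlin_comb c [fst x, fst y] [r, s], rlin_comb c [snd x, snd y] [r, s]) \<in> (H0set c k :: ('a laurent vec \<times> 'a laurent vec) set)"
    by (rule H0set_closed)
next
  show "\<exists>es. set es \<subseteq> (H0set c k :: ('a laurent vec \<times> 'a laurent vec) set) \<and>
    (\<forall>x\<in>(H0set c k :: ('a laurent vec \<times> 'a laurent vec) set). \<exists>!cs. length cs = length es \<and>
        x = (rlin_comb c (map fst es) cs, rlin_comb c (map snd es) cs))"
  proof (intro exI conjI ballI)
    show "set (ebasis c k :: ('a laurent vec \<times> 'a laurent vec) list) \<subseteq> (H0set c k :: ('a laurent vec \<times> 'a laurent vec) set)"
      by (auto simp: ebasis_def intro: ebase_in)
  next
    fix x assume x: "x \<in> (H0set c k :: ('a laurent vec \<times> 'a laurent vec) set)"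
    obtain u w where uw: "x = (u, w)" by (cases x)
    with x have xin: "(u, w) \<in> (H0set c k :: ('a laurent vec \<times> 'a laurent vec) set)" by simp
    then have u: "u \<in> vec_over Rxinv c" and w: "w \<in> vec_over Rx c"
      and rel: "\<forall>i<c. w $ i = X (2 * k) * u $ i" unfolding H0set_char2 by auto
    have lu: "Poly_Mapping.lookup (u $ i) s = (if 0 - int (NN k) < s \<and> s \<le> 0 then coords c k u ! (i * NN k + nat (0 - s)) else 0)"
      if "i < c" for i s
      using coords_nth[of i c k s u] lookup_u_vanish[OF xin that, of s] that by auto
    have ueq: "u = rlin_comb c (map fst (ebasis c k)) (coords c k u)"
    proof (rule eq_vecI)
      fix i assume "i < dim_vec (rlin_comb c (map fst (ebasis c k)) (coords c k u))"
      then have i: "i < c" by (simp add: rlin_comb_def)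
      show "u $ i = rlin_comb c (map fst (ebasis c k)) (coords c k u) $ i"
        by (rule poly_mapping_eqI) (simp add: lookup_rlin_fst[OF i] lu[OF i])
    qed (use u in \<open>simp add: rlin_comb_def vec_over_def\<close>)
    have weq: "w = rlin_comb c (map snd (ebasis c k)) (coords c k u)"
    proof (rule eq_vecI)
      fix i assume "i < dim_vec (rlin_comb c (map snd (ebasis c k)) (coords c k u))"
      then have i: "i < c" by (simp add: rlin_comb_def)
      show "w $ i = rlin_comb c (map snd (ebasis c k)) (coords c k u) $ i"
      proof (rule poly_mapping_eqI)
        fix s
        have "Poly_Mapping.lookup (w $ i) s = Poly_Mapping.lookup (u $ i) (s - 2 * k)"
          using rel i by (simp add: lookup_X_mult)
        also have "\<dots> = Poly_Mapping.lookup (rlin_comb c (map snd (ebasis c k)) (coords c k u) $ i) s"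
          unfolding lu[OF i] lookup_rlin_snd[OF i]
          by (rule if_cong) (auto simp: algebra_simps)
        finally show "Poly_Mapping.lookup (w $ i) s = Poly_Mapping.lookup (rlin_comb c (map snd (ebasis c k)) (coords c k u) $ i) s" .
      qed
    qed (use w in \<open>simp add: rlin_comb_def vec_over_def\<close>)
    show "\<exists>!cs. length cs = length (ebasis c k) \<and>
        x = (rlin_comb c (map fst (ebasis c k)) cs, rlin_comb c (map snd (ebasis c k)) cs)"
    proof (rule ex1I[of _ "coords c k u"])
      show "length (coords c k u) = length (ebasis c k) \<and>
        x = (rlin_comb c (map fst (ebasis c k)) (coords c k u), rlin_comb c (map snd (ebasis c k)) (coords c k u))"
        using ueq weq uw by (simp add: coords_def ebasis_len)
    next
      fix cs assume H: "length cs = length (ebasis c k) \<and>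
        x = (rlin_comb c (map fst (ebasis c k)) cs, rlin_comb c (map snd (ebasis c k)) cs)"
      then have ucs: "u = rlin_comb c (map fst (ebasis c k)) cs" using uw by simp
      show "cs = coords c k u"
      proof (rule nth_equalityI)
        show "length cs = length (coords c k u)" using H by (simp add: coords_def ebasis_len)
      next
        fix idx assume "idx < length cs"
        then have idx: "idx < c * NN k" using H by (simp add: ebasis_len)
        then have N: "NN k > 0" by (cases "NN k") auto
        have i: "idx div NN k < c" using idx by (simp add: less_mult_imp_div_less)
        have m: "idx mod NN k < NN k" using N by simp
        have "coords c k u ! idx = Poly_Mapping.lookup (u $ (idx div NN k)) (- int (idx mod NN k))"
          using idx by (simp add: coords_def)
        also have "\<dots> = cs ! (idx div NN k * NN k + nat (0 - (- int (idx mod NN k))))"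
          unfolding ucs lookup_rlin_fst[OF i] using m by simp
        also have "\<dots> = cs ! idx" by simp
        finally show "cs ! idx = coords c k u ! idx" by simp
      qed
    qed
  qed
qed

lemma split_laurent:
  fixes f :: "'a::ring_1 laurent"
  assumes "k \<ge> 0"
  shows "\<exists>a\<in>Rxinv. \<exists>b\<in>Rx. - (X k * a) + X (-k) * b = f"
proof -
  define lowf where "lowf = (\<lambda>t. if t \<le> k then Poly_Mapping.lookup f t else 0)"
  have fin: "finite {t. lowf t \<noteq> 0}"
    by (rule finite_subset[of _ "Poly_Mapping.keys f"]) (auto simp: lowf_def in_keys_iff)
  define low where "low = Abs_poly_mapping lowf"
  have ll: "Poly_Mapping.lookup low t = (if t \<le> k then Poly_Mapping.lookup f t else 0)" for t
    using fin by (simp add: low_def lowf_def)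
  define high where "high = f - low"
  have lh: "Poly_Mapping.lookup high t = (if t \<le> k then 0 else Poly_Mapping.lookup f t)" for t
    by (simp add: high_def lookup_minus ll)
  define a where "a = - (X (-k) * low)"
  define b where "b = X k * high"
  have "a \<in> Rxinv" unfolding Rxinv_iff a_def by (simp add: lookup_X_mult ll)
  moreover have "b \<in> Rx" unfolding Rx_iff b_def using assms by (simp add: lookup_X_mult lh)
  moreover have "- (X k * a) + X (-k) * b = f"
    unfolding a_def b_def by (simp add: X_inv_cancel high_def)
  ultimately show ?thesis by blast
qed

lemma chain_lemma:
  assumes A: "A \<in> carrier_mat r c" and u: "s + t = u"
  shows "DM r (X s) * SM (X t) A = A * DM c (X u)"
proof -
  have SA: "SM (X t) A \<in> carrier_mat r c" using A by (intro carrier_matI) auto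
  have "DM r (X s) * SM (X t) A = SM (X s) (SM (X t) A)" by (rule DM_mult[OF SA])
  also have "\<dots> = SM (X u) A" by (simp only: SM_SM X_mult u)
  also have "\<dots> = A * DM c (X u)" by (rule mult_DM[OF A, symmetric])
  finally show ?thesis .
qed

lemma carrier_vec_0_eq: "v \<in> carrier_vec 0 \<Longrightarrow> v = 0\<^sub>v 0"
  by auto

theorem mainTheorem4:
  fixes rC :: "int \<Rightarrow> nat" and dC :: "int \<Rightarrow> 'a::ring_1 laurent mat"
  assumes "free_complex UNIV rC dC"
  shows "\<exists>a dm mum b dp mup c d.
           sheaf_complex_free a dm mum b dp mup c d \<and>
           complex_iso UNIV c d rC dC \<and>
           H0_bounded_fg_free_complex a dm mum b dp mup c \<and>
           H1_vanishes a mum b mup c"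
proof -
  have dC: "\<And>n. dC n \<in> carrier_mat (rC (n - 1)) (rC n)"
    and dd: "\<And>n. dC (n - 1) * dC n = 0\<^sub>m (rC (n - 2)) (rC n)"
    and br: "bounded_ranks rC"
    using assms by (auto simp: free_complex_def mat_over_def)
  from br obtain lo hi where lohi: "\<And>n. n < lo \<or> hi < n \<Longrightarrow> rC n = 0"
    unfolding bounded_ranks_def by blast
  define BS where "BS = insert 0 (\<Union>n\<in>{lo..hi}. \<Union>i\<in>{..<rC (n - 1)}. \<Union>j\<in>{..<rC n}.
      abs ` Poly_Mapping.keys (dC n $$ (i, j)))"
  have finBS: "finite BS" unfolding BS_def by simp
  define B where "B = Max BS"
  have B0: "B \<ge> 0" unfolding B_def using finBS by (simp add: BS_def)
  have Bbound: "\<bar>t\<bar> \<le> B" if "i < rC (n - 1)" "j < rC n" "t \<in> Poly_Mapping.keys (dC n $$ (i, j))" for i j n t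
  proof -
    have "rC n \<noteq> 0" using that by simp
    then have "n \<in> {lo..hi}" using lohi[of n] by (meson atLeastAtMost_iff not_less)
    then have "\<bar>t\<bar> \<in> BS" unfolding BS_def using that by blast
    then show ?thesis unfolding B_def using finBS by simp
  qed
  define kk where "kk n = B * (hi - n)" for n
  define mum where "mum n = DM (rC n) (X (kk n) :: 'a laurent)" for n
  define mup where "mup n = DM (rC n) (X (- kk n) :: 'a laurent)" for n
  define dm where "dm n = SM (X (- B)) (dC n)" for n
  define dp where "dp n = SM (X B) (dC n)" for n
  have dmc: "dm n \<in> carrier_mat (rC (n - 1)) (rC n)" for n
    using dC[of n] unfolding dm_def by (intro carrier_matI) auto
  have dpc: "dp n \<in> carrier_mat (rC (n - 1)) (rC n)" for n
    using dC[of n] unfolding dp_def by (intro carrier_matI) auto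
  have mumc: "mum n \<in> carrier_mat (rC n) (rC n)" for n unfolding mum_def by (intro carrier_matI) auto
  have mupc: "mup n \<in> carrier_mat (rC n) (rC n)" for n unfolding mup_def by (intro carrier_matI) auto
  have dm_over: "dm n \<in> mat_over Rxinv (rC (n - 1)) (rC n)" for n
  proof -
    have "dm n $$ (i, j) \<in> Rxinv" if ij: "i < rC (n - 1)" "j < rC n" for i j
    proof -
      have "dim_row (dC n) = rC (n - 1)" "dim_col (dC n) = rC n" using dC[of n] by auto
      then have "dm n $$ (i, j) = X (- B) * dC n $$ (i, j)" using ij by (simp add: dm_def)
      then show ?thesis using X_mult_Rxinv[OF Bbound[OF ij]] by simp
    qed
    then show ?thesis using dmc unfolding mat_over_def by blast
  qed
  have dp_over: "dp n \<in> mat_over Rx (rC (n - 1)) (rC n)" for n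
  proof -
    have "dp n $$ (i, j) \<in> Rx" if ij: "i < rC (n - 1)" "j < rC n" for i j
    proof -
      have "dim_row (dC n) = rC (n - 1)" "dim_col (dC n) = rC n" using dC[of n] by auto
      then have "dp n $$ (i, j) = X (B) * dC n $$ (i, j)" using ij by (simp add: dp_def)
      then show ?thesis using X_mult_Rx[OF Bbound[OF ij]] by simp
    qed
    then show ?thesis using dpc unfolding mat_over_def by blast
  qed
  have dmdm: "dm (n - 1) * dm n = 0\<^sub>m (rC (n - 2)) (rC n)" for n
  proof -
    have "dm (n - 1) * dm n = SM (X (- B + - B)) (dC (n - 1) * dC n)"
      unfolding dm_def by (rule SM_mult_SM) (use dC[of n] dC[of "n - 1"] in simp)
    also have "\<dots> = 0\<^sub>m (rC (n - 2)) (rC n)" by (simp add: dd SM_zero)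
    finally show ?thesis .
  qed
  have dpdp: "dp (n - 1) * dp n = 0\<^sub>m (rC (n - 2)) (rC n)" for n
  proof -
    have "dp (n - 1) * dp n = SM (X (B + B)) (dC (n - 1) * dC n)"
      unfolding dp_def by (rule SM_mult_SM) (use dC[of n] dC[of "n - 1"] in simp)
    also have "\<dots> = 0\<^sub>m (rC (n - 2)) (rC n)" by (simp add: dd SM_zero)
    finally show ?thesis .
  qed
  have kkrec: "kk (n - 1) + - B = kk n" for n by (simp add: kk_def algebra_simps)
  have kkrec2: "- kk (n - 1) + B = - kk n" for n by (simp add: kk_def algebra_simps)
  have mum_chain: "mum (n - 1) * dm n = dC n * mum n" for n
    unfolding mum_def dm_def by (rule chain_lemma[OF dC kkrec])
  have mup_chain: "mup (n - 1) * dp n = dC n * mup n" for n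
    unfolding mup_def dp_def by (rule chain_lemma[OF dC kkrec2])
  have H0eq: "H0 rC mum rC mup rC n = H0set (rC n) (kk n)" for n
    by (simp add: H0_def H0set_def mum_def mup_def)
  have sheaf: "sheaf_complex_free rC dm mum rC dp mup rC dC"
    unfolding sheaf_complex_free_def free_complex_def chain_map_def
    using dm_over dp_over dmdm dpdp br assms mum_chain mup_chain
    by (auto simp: mat_over_def mum_def mup_def iso_DM free_complex_def)
  have iso: "complex_iso UNIV rC dC rC dC"
  proof -
    have ch: "1\<^sub>m (rC (n - 1)) * dC n = dC n * 1\<^sub>m (rC n)" for n
    proof -
      have "1\<^sub>m (rC (n - 1)) * dC n = dC n" by (rule left_mult_one_mat[OF dC])
      moreover have "dC n * 1\<^sub>m (rC n) = dC n" by (rule right_mult_one_mat[OF dC])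
      ultimately show ?thesis by simp
    qed
    show ?thesis unfolding complex_iso_def chain_map_def
      by (rule exI[of _ "\<lambda>n. 1\<^sub>m (rC n)"], rule exI[of _ "\<lambda>n. 1\<^sub>m (rC n)"]) (auto simp: mat_over_def ch)
  qed
  have H0map: "(dm n *\<^sub>v u, dp n *\<^sub>v w) \<in> H0set (rC (n - 1)) (kk (n - 1))"
    if uw: "(u, w) \<in> H0set (rC n) (kk n)" for n u w
  proof -
    from uw have u: "u \<in> vec_over Rxinv (rC n)" and w: "w \<in> vec_over Rx (rC n)"
      and E: "- (mum n *\<^sub>v u) + mup n *\<^sub>v w = 0\<^sub>v (rC n)"
      by (auto simp: H0set_def mum_def mup_def)
    have uc: "u \<in> carrier_vec (rC n)" and wc: "w \<in> carrier_vec (rC n)" using u w by (auto simp: vec_over_def)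
    have ac: "mum n *\<^sub>v u \<in> carrier_vec (rC n)" by (rule mult_mat_vec_carrier[OF mumc uc])
    have bc: "mup n *\<^sub>v w \<in> carrier_vec (rC n)" by (rule mult_mat_vec_carrier[OF mupc wc])
    have ab: "mup n *\<^sub>v w = mum n *\<^sub>v u"
    proof (rule eq_vecI)
      fix i assume "i < dim_vec (mum n *\<^sub>v u)"
      then have i: "i < rC n" by (simp add: mum_def)
      have da: "dim_vec (mum n *\<^sub>v u) = rC n" by (simp add: mum_def)
      have db: "dim_vec (mup n *\<^sub>v w) = rC n" by (simp add: mup_def)
      from arg_cong[OF E, of "\<lambda>v. v $ i"] i
      have "- ((mum n *\<^sub>v u) $ i) + (mup n *\<^sub>v w) $ i = 0"
        by (simp add: index_add_vec index_uminus_vec mum_def mup_def)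
      then show "(mup n *\<^sub>v w) $ i = (mum n *\<^sub>v u) $ i" by (metis add.commute add_eq_0_iff minus_minus)
    qed (simp add: mum_def mup_def)
    have "- (mum (n - 1) *\<^sub>v (dm n *\<^sub>v u)) + mup (n - 1) *\<^sub>v (dp n *\<^sub>v w) = 0\<^sub>v (rC (n - 1))"
    proof -
      have "mum (n - 1) *\<^sub>v (dm n *\<^sub>v u) = (mum (n - 1) * dm n) *\<^sub>v u"
        by (rule assoc_mult_mat_vec[symmetric, OF mumc dmc uc])
      also have "\<dots> = (dC n * mum n) *\<^sub>v u" by (simp only: mum_chain)
      also have "\<dots> = dC n *\<^sub>v (mum n *\<^sub>v u)" by (rule assoc_mult_mat_vec[OF dC mumc uc])
      finally have e1: "mum (n - 1) *\<^sub>v (dm n *\<^sub>v u) = dC n *\<^sub>v (mum n *\<^sub>v u)" .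
      have "mup (n - 1) *\<^sub>v (dp n *\<^sub>v w) = (mup (n - 1) * dp n) *\<^sub>v w"
        by (rule assoc_mult_mat_vec[symmetric, OF mupc dpc wc])
      also have "\<dots> = (dC n * mup n) *\<^sub>v w" by (simp only: mup_chain)
      also have "\<dots> = dC n *\<^sub>v (mup n *\<^sub>v w)" by (rule assoc_mult_mat_vec[OF dC mupc wc])
      also have "\<dots> = dC n *\<^sub>v (mum n *\<^sub>v u)" by (simp only: ab)
      finally have e2: "mup (n - 1) *\<^sub>v (dp n *\<^sub>v w) = dC n *\<^sub>v (mum n *\<^sub>v u)" .
      note e1 e2
      moreover have "dC n *\<^sub>v (mum n *\<^sub>v u) \<in> carrier_vec (rC (n - 1))" by (rule mult_mat_vec_carrier[OF dC ac])
      ultimately show ?thesis by (simp only: uminus_l_inv_vec)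
    qed
    moreover have "dm n *\<^sub>v u \<in> vec_over Rxinv (rC (n - 1))" by (rule Rxinv_mult_vec[OF dm_over u])
    moreover have "dp n *\<^sub>v w \<in> vec_over Rx (rC (n - 1))" by (rule Rx_mult_vec[OF dp_over w])
    ultimately show ?thesis by (simp add: H0set_def mum_def mup_def)
  qed
  have H0zero: "H0set 0 k = {(0\<^sub>v 0 :: 'a laurent vec, 0\<^sub>v 0)}" for k
  proof
    show "H0set 0 k \<subseteq> {(0\<^sub>v 0 :: 'a laurent vec, 0\<^sub>v 0)}"
      by (auto simp: H0set_def vec_over_def)
    show "{(0\<^sub>v 0 :: 'a laurent vec, 0\<^sub>v 0)} \<subseteq> H0set 0 k"
      by (auto simp: H0set_def vec_over_def intro!: eq_vecI)
  qed
  have H0b: "H0_bounded_fg_free_complex rC dm mum rC dp mup rC"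
    unfolding H0_bounded_fg_free_complex_def H0eq
  proof (intro conjI allI ballI)
    fix n show "fg_free_R (rC n) (rC n) (H0set (rC n) (kk n) :: ('a laurent vec \<times> 'a laurent vec) set)"
      by (rule H0set_fg_free)
  next
    fix n and p :: "'a laurent vec \<times> 'a laurent vec" assume "p \<in> H0set (rC n) (kk n)"
    then show "case p of (u, w) \<Rightarrow> (dm n *\<^sub>v u, dp n *\<^sub>v w) \<in> H0set (rC (n - 1)) (kk (n - 1))"
      using H0map by (cases p) auto
  next
    show "\<exists>lo hi. \<forall>n. n < lo \<or> hi < n \<longrightarrow> (H0set (rC n) (kk n) :: ('a laurent vec \<times> 'a laurent vec) set) = {(0\<^sub>v (rC n), 0\<^sub>v (rC n))}"
    proof -
      have Z: "(H0set (rC n) (kk n) :: ('a laurent vec \<times> 'a laurent vec) set) = {(0\<^sub>v (rC n), 0\<^sub>v (rC n))}"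
        if "n < lo \<or> hi < n" for n
      proof -
        have r: "rC n = 0" using that by (rule lohi)
        show ?thesis unfolding r by (rule H0zero)
      qed
      then show ?thesis by blast
    qed
  qed
  have H1: "H1_vanishes rC mum rC mup rC"
    unfolding H1_vanishes_def
  proof (intro allI ballI)
    fix n and v :: "'a laurent vec" assume v: "v \<in> carrier_vec (rC n)"
    show "\<exists>u\<in>vec_over Rxinv (rC n). \<exists>w\<in>vec_over Rx (rC n). - (mum n *\<^sub>v u) + mup n *\<^sub>v w = v"
    proof (cases "rC n = 0")
      case True
      then show ?thesis using v
        by (intro bexI[of _ "0\<^sub>v 0"]) (auto simp: vec_over_def mum_def mup_def intro!: eq_vecI)
    next
      case False
      then have "n \<le> hi" using lohi[of n] by (meson not_less)
      then have k0: "kk n \<ge> 0" using B0 by (simp add: kk_def)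
      have "\<forall>i. \<exists>ab. i < rC n \<longrightarrow> fst ab \<in> Rxinv \<and> snd ab \<in> Rx \<and>
          - (X (kk n) * fst ab) + X (- kk n) * snd ab = v $ i"
        using split_laurent[OF k0] by fastforce
      then obtain g where g: "\<And>i. i < rC n \<Longrightarrow> fst (g i) \<in> Rxinv \<and> snd (g i) \<in> Rx \<and>
          - (X (kk n) * fst (g i)) + X (- kk n) * snd (g i) = v $ i"
        by metis
      define u where "u = vec (rC n) (\<lambda>i. fst (g i))"
      define w where "w = vec (rC n) (\<lambda>i. snd (g i))"
      have u: "u \<in> vec_over Rxinv (rC n)" using g by (auto simp: u_def vec_over_def)
      have w: "w \<in> vec_over Rx (rC n)" using g by (auto simp: w_def vec_over_def)
      have "- (mum n *\<^sub>v u) + mup n *\<^sub>v w = v"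
      proof -
        have d1: "mum n *\<^sub>v u = vec (rC n) (\<lambda>i. X (kk n) * u $ i)"
          unfolding mum_def by (rule DM_mult_vec) (simp add: u_def)
        have d2: "mup n *\<^sub>v w = vec (rC n) (\<lambda>i. X (- kk n) * w $ i)"
          unfolding mup_def by (rule DM_mult_vec) (simp add: w_def)
        show ?thesis unfolding d1 d2
          by (rule eq_vecI) (use v g in \<open>auto simp: u_def w_def\<close>)
      qed
      with u w show ?thesis by blast
    qed
  qed
  show ?thesis using sheaf iso H0b H1 by blast
qed

end
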